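(* Each of $P_3$, $P_4$ and $C_4$ is $T_1$-Tur\'an-good; that is, for each $H\in\{P_3,P_4,C_4\}$ there is $n_0$ such that $\mathrm{ex}(n,H,T_1)=\mathcal{N}(H,T_2(n))$ for all $n\ge n_0$.
   Context: $P_k$ is the path on $k$ vertices, $C_4$ the cycle on $4$ vertices, and $T_1$ (the paw) is the graph consisting of a triangle and one further vertex joined to exactly one vertex of the triangle. $T_2(n)$ is the complete bipartite graph on $n$ vertices with parts of sizes $\lfloor n/2\rfloor$ and $\lceil n/2\rceil$. For graphs $H,G$, $\mathcal{N}(H,G)$ is the number of subgraphs of $G$ isomorphic to $H$, and $\mathrm{ex}(n,H,F)$ is the maximum of $\mathcal{N}(H,G)$ over $F$-free graphs $G$ on $n$ vertices. *)

theory Defs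
  imports Main
begin

type_synonym 'a graph = "'a set \<times> 'a set set"

definition simple_graph :: "'a graph \<Rightarrow> bool" where
  "simple_graph G \<longleftrightarrow> finite (fst G) \<and>
     (\<forall>e\<in>snd G. \<exists>u v. u \<noteq> v \<and> u \<in> fst G \<and> v \<in> fst G \<and> e = {u, v})"

definition graph_iso :: "'a graph \<Rightarrow> 'b graph \<Rightarrow> bool" where
  "graph_iso G H \<longleftrightarrow> (\<exists>f. bij_betw f (fst G) (fst H) \<and>
     (\<forall>u\<in>fst G. \<forall>v\<in>fst G. {u, v} \<in> snd G \<longleftrightarrow> {f u, f v} \<in> snd H))"

definition subgraphs :: "'a graph \<Rightarrow> 'a graph set" where
  "subgraphs G = {(W, F). W \<subseteq> fst G \<and> F \<subseteq> snd G \<and> (\<forall>e\<in>F. e \<subseteq> W)}"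

definition count_copies :: "'b graph \<Rightarrow> 'a graph \<Rightarrow> nat" where
  "count_copies H G = card {S \<in> subgraphs G. graph_iso S H}"

definition free :: "'b graph \<Rightarrow> 'a graph \<Rightarrow> bool" where
  "free F G \<longleftrightarrow> (\<forall>S \<in> subgraphs G. \<not> graph_iso S F)"

text \<open>ex(n, H, F): max of N(H,G) over F-free simple graphs G on n vertices
 (vertex set {0..<n}; counts are isomorphism invariant).\<close>
definition ex :: "nat \<Rightarrow> 'b graph \<Rightarrow> 'c graph \<Rightarrow> nat" where
  "ex n H F = Max {count_copies H G | G :: nat graph.
       simple_graph G \<and> fst G = {0..<n} \<and> free F G}"

definition P3 :: "nat graph" where
  "P3 = ({0, 1, 2}, {{0, 1}, {1, 2}})"

definition P4 :: "nat graph" where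
  "P4 = ({0, 1, 2, 3}, {{0, 1}, {1, 2}, {2, 3}})"

definition C4 :: "nat graph" where
  "C4 = ({0, 1, 2, 3}, {{0, 1}, {1, 2}, {2, 3}, {3, 0}})"

definition T1 :: "nat graph" where
  "T1 = ({0, 1, 2, 3}, {{0, 1}, {1, 2}, {0, 2}, {2, 3}})"

definition T2 :: "nat \<Rightarrow> nat graph" where
  "T2 n = ({0..<n}, {{u, v} | u v. u < n div 2 \<and> n div 2 \<le> v \<and> v < n})"

end

theory Submission
  imports Defs
begin


definition nbr :: "'a graph \<Rightarrow> 'a \<Rightarrow> 'a set" where
  "nbr G u = {v \<in> fst G. {u, v} \<in> snd G}"

lemma simple_edge:
  assumes "simple_graph G" "{u, v} \<in> snd G"
  shows "u \<noteq> v \<and> u \<in> fst G \<and> v \<in> fst G"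
proof -
  obtain p q where "p \<noteq> q" "p \<in> fst G" "q \<in> fst G" "{u, v} = {p, q}"
    using assms unfolding simple_graph_def by blast
  then show ?thesis by (auto simp: doubleton_eq_iff)
qed

lemma iso_inv:
  assumes "graph_iso S H"
  shows "\<exists>g. bij_betw g (fst H) (fst S) \<and>
     (\<forall>i\<in>fst H. \<forall>j\<in>fst H. {g i, g j} \<in> snd S \<longleftrightarrow> {i, j} \<in> snd H)"
proof -
  obtain f where f: "bij_betw f (fst S) (fst H)"
    "\<forall>u\<in>fst S. \<forall>v\<in>fst S. {u, v} \<in> snd S \<longleftrightarrow> {f u, f v} \<in> snd H"
    using assms unfolding graph_iso_def by blast
  define g where "g = inv_into (fst S) f"
  have g: "bij_betw g (fst H) (fst S)" using f(1) bij_betw_inv_into g_def by blast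
  have "\<forall>i\<in>fst H. g i \<in> fst S \<and> f (g i) = i"
    using f(1) g_def by (metis bij_betw_def bij_betw_imp_surj_on f_inv_into_f inv_into_into)
  then show ?thesis using g f(2) by (metis (no_types, lifting))
qed

lemma copy_form:
  assumes "simple_graph G" "S \<in> subgraphs G" "graph_iso S H" "simple_graph H"
  shows "\<exists>g. inj_on g (fst H) \<and> fst S = g ` fst H \<and>
     snd S = (`) g ` snd H \<and> snd S \<subseteq> snd G"
proof -
  obtain g where g: "bij_betw g (fst H) (fst S)"
     "\<forall>i\<in>fst H. \<forall>j\<in>fst H. {g i, g j} \<in> snd S \<longleftrightarrow> {i, j} \<in> snd H"
    using iso_inv[OF assms(3)] by blast
  have sub: "snd S \<subseteq> snd G" "\<forall>e\<in>snd S. e \<subseteq> fst S"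
    using assms(2) unfolding subgraphs_def by (cases S, simp)+
  have "snd S \<subseteq> (`) g ` snd H"
  proof
    fix e assume e: "e \<in> snd S"
    then obtain p q where pq: "e = {p, q}" "p \<in> fst G"
      using sub assms(1) unfolding simple_graph_def by blast
    have "p \<in> fst S" "q \<in> fst S" using sub(2) e pq by auto
    moreover have gS: "fst S = g ` fst H" using g(1) by (simp add: bij_betw_def)
    ultimately obtain i j where ij: "i \<in> fst H" "j \<in> fst H" "p = g i" "q = g j"
      by blast
    then have "{i, j} \<in> snd H" using g(2) e pq by blast
    moreover have "e = g ` {i, j}" using pq ij by simp
    ultimately show "e \<in> (`) g ` snd H" by blast
  qed
  moreover have "(`) g ` snd H \<subseteq> snd S"
  proof
    fix e assume "e \<in> (`) g ` snd H"
    then obtain e' where e': "e' \<in> snd H" "e = g ` e'" by blast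
    then obtain i j where ij: "e' = {i, j}" "i \<in> fst H" "j \<in> fst H"
      using assms(4) unfolding simple_graph_def by blast
    have "{g i, g j} \<in> snd S \<longleftrightarrow> {i, j} \<in> snd H" using g(2) ij(2,3) by blast
    moreover have "e = {g i, g j}" unfolding e'(2) ij(1) by simp
    ultimately show "e \<in> snd S" using e'(1) ij(1) by simp
  qed
  ultimately have "snd S = (`) g ` snd H" by (rule subset_antisym)
  moreover have "inj_on g (fst H)" "fst S = g ` fst H" using g(1) unfolding bij_betw_def by simp_all
  ultimately show ?thesis using sub(1) by (intro exI[of _ g]) simp
qed

lemma iso_image:
  assumes "inj_on g (fst H)" "simple_graph H"
  shows "graph_iso (g ` fst H, (`) g ` snd H) H"
proof -
  define f where "f = inv_into (fst H) g"
  have b: "bij_betw g (fst H) (g ` fst H)" using assms(1) by (simp add: bij_betw_def)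
  have fb: "bij_betw f (g ` fst H) (fst H)" unfolding f_def by (rule bij_betw_inv_into[OF b])
  have fg: "f (g i) = i" if "i \<in> fst H" for i unfolding f_def using inv_into_f_f[OF assms(1) that] .
  have E: "\<forall>e\<in>snd H. e \<subseteq> fst H"
  proof
    fix e assume "e \<in> snd H"
    then obtain a b where "a \<in> fst H" "b \<in> fst H" "e = {a, b}"
      using assms(2) unfolding simple_graph_def by blast
    then show "e \<subseteq> fst H" by simp
  qed
  have "{p, q} \<in> (`) g ` snd H \<longleftrightarrow> {f p, f q} \<in> snd H" if pq: "p \<in> g ` fst H" "q \<in> g ` fst H" for p q
  proof -
    obtain i where i: "i \<in> fst H" "p = g i" using pq(1) by blast
    obtain j where j: "j \<in> fst H" "q = g j" using pq(2) by blast
    note ij = i(1) j(1) i(2) j(2)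
    have "{g i, g j} \<in> (`) g ` snd H \<longleftrightarrow> {i, j} \<in> snd H"
    proof
      assume "{g i, g j} \<in> (`) g ` snd H"
      then obtain e where e: "e \<in> snd H" "{g i, g j} = g ` e" by blast
      have "g ` {i, j} = g ` e" using e by simp
      moreover have s1: "{i, j} \<subseteq> fst H" using ij by simp
      moreover have s2: "e \<subseteq> fst H" using E e(1) by blast
      ultimately have "{i, j} = e" using inj_on_image_eq_iff[OF assms(1) s1 s2] by simp
      then show "{i, j} \<in> snd H" using e by simp
    next
      assume "{i, j} \<in> snd H"
      then show "{g i, g j} \<in> (`) g ` snd H" using image_eqI[of "{g i, g j}" "(`) g" "{i, j}"] by simp
    qed
    then show ?thesis using ij fg by simp
  qed
  then show ?thesis unfolding graph_iso_def using fb by auto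
qed



lemma inj3: fixes x u y x' u' y' :: nat
  assumes "x \<noteq> u" "u \<noteq> y" "x < y" "x' \<noteq> u'" "u' \<noteq> y'" "x' < y'"
   "{{x,u},{u,y}} = {{x',u'},{u',y'}}"
  shows "x = x' \<and> u = u' \<and> y = y'"
  using assms by (auto simp: doubleton_eq_iff insert_eq_iff)

definition nb :: "'a set set \<Rightarrow> 'a \<Rightarrow> 'a set" where
  "nb F p = {q. {p, q} \<in> F}"

lemma nb_path: assumes "distinct [x,u,v,y]"
  shows "nb {{x,u},{u,v},{v,y}} p = (if p = x then {u} else if p = u then {x,v} else
     if p = v then {u,y} else if p = y then {v} else {})"
  using assms unfolding nb_def by (auto simp: doubleton_eq_iff)

lemma nb_cyc: assumes "distinct [x,u,v,y]"
  shows "nb {{x,u},{u,v},{v,y},{y,x}} p = (if p = x then {u,y} else if p = u then {x,v} else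
     if p = v then {u,y} else if p = y then {v,x} else {})"
  using assms unfolding nb_def by (auto simp: doubleton_eq_iff)

lemma ends_path: assumes "distinct [x,u,v,y]"
  shows "{p. \<exists>q. nb {{x,u},{u,v},{v,y}} p = {q}} = {x,y}"
proof -
  have "\<And>p. (\<exists>q. nb {{x,u},{u,v},{v,y}} p = {q}) \<longleftrightarrow> p = x \<or> p = y"
    using assms by (auto simp: nb_path doubleton_eq_iff)
  then show ?thesis by auto
qed

lemma inj4: fixes x u v y x' u' v' y' :: nat
  assumes "distinct [x,u,v,y]" "x < y" "distinct [x',u',v',y']" "x' < y'"
   "{{x,u},{u,v},{v,y}} = {{x',u'},{u',v'},{v',y'}}"
  shows "x = x' \<and> u = u' \<and> v = v' \<and> y = y'"
proof -
  have "{x,y} = {x',y'}" using ends_path[OF assms(1)] ends_path[OF assms(3)] assms(5) by simp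
  then have xy: "x = x'" "y = y'" using assms(2,4) by (auto simp: doubleton_eq_iff)
  have "nb {{x,u},{u,v},{v,y}} x = {u}" "nb {{x,u},{u,v},{v,y}} y = {v}"
    using assms(1) by (simp_all add: nb_path[OF assms(1)])
  moreover have "nb {{x',u'},{u',v'},{v',y'}} x' = {u'}" "nb {{x',u'},{u',v'},{v',y'}} y' = {v'}"
    using assms(3) by (simp_all add: nb_path[OF assms(3)])
  ultimately have "{u} = {u'}" "{v} = {v'}" using assms(5) xy by metis+
  then show ?thesis using xy by simp
qed

lemma injc: fixes x u v y x' u' v' y' :: nat
  assumes "distinct [x,u,v,y]" "x < u" "x < v" "x < y" "u < y" "distinct [x',u',v',y']"
    "x' < u'" "x' < v'" "x' < y'" "u' < y'"
   "{x,u,v,y} = {x',u',v',y'}"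
   "{{x,u},{u,v},{v,y},{y,x}} = {{x',u'},{u',v'},{v',y'},{y',x'}}"
  shows "x = x' \<and> u = u' \<and> v = v' \<and> y = y'"
proof -
  have "Min {x,u,v,y} = x" using assms(2-4) by (simp add: min_def)
  moreover have "Min {x',u',v',y'} = x'" using assms(7-9) by (simp add: min_def)
  ultimately have x: "x = x'" using assms(11) by metis
  have "nb {{x,u},{u,v},{v,y},{y,x}} x = {u,y}" "nb {{x,u},{u,v},{v,y},{y,x}} u = {x,v}"
    using assms(1) by (simp_all add: nb_cyc[OF assms(1)])
  moreover have "nb {{x',u'},{u',v'},{v',y'},{y',x'}} x' = {u',y'}" "nb {{x',u'},{u',v'},{v',y'},{y',x'}} u' = {x',v'}"
    using assms(6) by (simp_all add: nb_cyc[OF assms(6)])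
  ultimately have "{u,y} = {u',y'}" using assms(12) x by metis
  then have uy: "u = u'" "y = y'" using assms(5,10) by (auto simp: doubleton_eq_iff)
  have "{x,v} = {x,v'}" using assms(12) x uy \<open>nb {{x,u},{u,v},{v,y},{y,x}} u = {x,v}\<close>
    \<open>nb {{x',u'},{u',v'},{v',y'},{y',x'}} u' = {x',v'}\<close> by metis
  then have "v = v'" using assms(1,6) x by (auto simp: doubleton_eq_iff)
  then show ?thesis using x uy by simp
qed

lemma simple_graph_intro:
  assumes "finite V" "\<forall>e\<in>E. \<exists>u\<in>V. \<exists>v\<in>V. u \<noteq> v \<and> e = {u,v}"
  shows "simple_graph (V, E)"
  using assms unfolding simple_graph_def by fastforce

lemma simple_P3: "simple_graph P3" unfolding P3_def by (rule simple_graph_intro) auto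
lemma simple_P4: "simple_graph P4" unfolding P4_def by (rule simple_graph_intro) auto
lemma simple_C4: "simple_graph C4" unfolding C4_def by (rule simple_graph_intro) auto
lemma simple_T1: "simple_graph T1" unfolding T1_def by (rule simple_graph_intro) auto

definition g4 :: "'a \<Rightarrow> 'a \<Rightarrow> 'a \<Rightarrow> 'a \<Rightarrow> nat \<Rightarrow> 'a" where
  "g4 a b c d i = (if i = 0 then a else if i = 1 then b else if i = 2 then c else d)"

lemma g4_inj: "distinct [a,b,c,d] \<Longrightarrow> inj_on (g4 a b c d) {0,1,2,3}"
  unfolding inj_on_def g4_def by auto

lemma g4_inj3: "distinct [a,b,c] \<Longrightarrow> inj_on (g4 a b c d) {0,1,2}"
  unfolding inj_on_def g4_def by auto

lemma iso3: assumes "distinct [x,u,y]"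
  shows "graph_iso ({x,u,y}, {{x,u},{u,y}}) P3"
proof -
  have "({x,u,y}, {{x,u},{u,y}}) = (g4 x u y y ` fst P3, (`) (g4 x u y y) ` snd P3)"
    unfolding P3_def by (simp add: g4_def insert_commute)
  then show ?thesis using iso_image[OF _ simple_P3, of "g4 x u y y"] g4_inj3[OF assms]
    unfolding P3_def by simp
qed

lemma iso4: assumes "distinct [x,u,v,y]"
  shows "graph_iso ({x,u,v,y}, {{x,u},{u,v},{v,y}}) P4"
proof -
  have "({x,u,v,y}, {{x,u},{u,v},{v,y}}) = (g4 x u v y ` fst P4, (`) (g4 x u v y) ` snd P4)"
    unfolding P4_def by (simp add: g4_def insert_commute)
  then show ?thesis using iso_image[OF _ simple_P4, of "g4 x u v y"] g4_inj[OF assms]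
    unfolding P4_def by simp
qed

lemma isoc: assumes "distinct [x,u,v,y]"
  shows "graph_iso ({x,u,v,y}, {{x,u},{u,v},{v,y},{y,x}}) C4"
proof -
  have "({x,u,v,y}, {{x,u},{u,v},{v,y},{y,x}}) = (g4 x u v y ` fst C4, (`) (g4 x u v y) ` snd C4)"
    unfolding C4_def by (simp add: g4_def insert_commute)
  then show ?thesis using iso_image[OF _ simple_C4, of "g4 x u v y"] g4_inj[OF assms]
    unfolding C4_def by simp
qed

lemma isoT1: assumes "distinct [a,b,c,d]"
  shows "graph_iso ({a,b,c,d}, {{a,b},{b,c},{a,c},{c,d}}) T1"
proof -
  have "({a,b,c,d}, {{a,b},{b,c},{a,c},{c,d}}) = (g4 a b c d ` fst T1, (`) (g4 a b c d) ` snd T1)"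
    unfolding T1_def by (simp add: g4_def insert_commute)
  then show ?thesis using iso_image[OF _ simple_T1, of "g4 a b c d"] g4_inj[OF assms]
    unfolding T1_def by simp
qed



definition N3 :: "nat graph \<Rightarrow> (nat \<times> nat \<times> nat) set" where
  "N3 G = {(x,u,y). {x,u} \<in> snd G \<and> {u,y} \<in> snd G \<and> x < y}"

definition pi3 :: "nat \<times> nat \<times> nat \<Rightarrow> nat graph" where
  "pi3 = (\<lambda>(x,u,y). ({x,u,y}, {{x,u},{u,y}}))"

definition Path :: "nat graph \<Rightarrow> (nat \<times> nat \<times> nat \<times> nat) set" where
  "Path G = {(x,u,v,y). {x,u} \<in> snd G \<and> {u,v} \<in> snd G \<and> {v,y} \<in> snd G \<and> x \<noteq> v \<and> u \<noteq> y \<and> x \<noteq> y}"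

definition P4N :: "nat graph \<Rightarrow> (nat \<times> nat \<times> nat \<times> nat) set" where
  "P4N G = {(x,u,v,y). (x,u,v,y) \<in> Path G \<and> x < y}"

definition pi4 :: "nat \<times> nat \<times> nat \<times> nat \<Rightarrow> nat graph" where
  "pi4 = (\<lambda>(x,u,v,y). ({x,u,v,y}, {{x,u},{u,v},{v,y}}))"

definition Cyc :: "nat graph \<Rightarrow> (nat \<times> nat \<times> nat \<times> nat) set" where
  "Cyc G = {(x,u,v,y). {x,u} \<in> snd G \<and> {u,v} \<in> snd G \<and> {v,y} \<in> snd G \<and> {y,x} \<in> snd G \<and> x \<noteq> v \<and> u \<noteq> y}"

definition NC :: "nat graph \<Rightarrow> (nat \<times> nat \<times> nat \<times> nat) set" where
  "NC G = {(x,u,v,y). (x,u,v,y) \<in> Cyc G \<and> x < u \<and> x < v \<and> x < y \<and> u < y}"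

definition pic :: "nat \<times> nat \<times> nat \<times> nat \<Rightarrow> nat graph" where
  "pic = (\<lambda>(x,u,v,y). ({x,u,v,y}, {{x,u},{u,v},{v,y},{y,x}}))"

definition dsym :: "nat \<Rightarrow> nat \<times> nat \<times> nat \<times> nat \<Rightarrow> nat \<times> nat \<times> nat \<times> nat" where
  "dsym k = (\<lambda>(x,u,v,y). [(x,u,v,y),(u,v,y,x),(v,y,x,u),(y,x,u,v),(x,y,v,u),(u,x,y,v),(v,u,x,y),(y,v,u,x)] ! k)"

lemma lt8: "(k::nat) < 8 \<Longrightarrow> k = 0 \<or> k = 1 \<or> k = 2 \<or> k = 3 \<or> k = 4 \<or> k = 5 \<or> k = 6 \<or> k = 7"
  by arith

lemma subgraph_intro:
  assumes "W \<subseteq> fst G" "F \<subseteq> snd G" "\<forall>e\<in>F. e \<subseteq> W"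
  shows "(W, F) \<in> subgraphs G"
  using assms unfolding subgraphs_def by simp

lemma p3_bij: assumes "simple_graph G"
  shows "bij_betw pi3 (N3 G) {S \<in> subgraphs G. graph_iso S P3}"
  unfolding bij_betw_def
proof
  show "inj_on pi3 (N3 G)"
  proof (rule inj_onI)
    fix a b assume ab: "a \<in> N3 G" "b \<in> N3 G" "pi3 a = pi3 b"
    obtain x u y where a: "a = (x,u,y)" by (cases a)
    obtain x' u' y' where b: "b = (x',u',y')" by (cases b)
    have "x \<noteq> u" "u \<noteq> y" "x < y" "x' \<noteq> u'" "u' \<noteq> y'" "x' < y'"
      using ab a b simple_edge[OF assms] unfolding N3_def by auto
    moreover have "{{x,u},{u,y}} = {{x',u'},{u',y'}}" using ab(3) a b unfolding pi3_def by simp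
    ultimately show "a = b" using inj3 a b by metis
  qed
  show "pi3 ` N3 G = {S \<in> subgraphs G. graph_iso S P3}"
  proof
    show "pi3 ` N3 G \<subseteq> {S \<in> subgraphs G. graph_iso S P3}"
    proof
      fix S assume "S \<in> pi3 ` N3 G"
      then obtain x u y where t: "(x,u,y) \<in> N3 G" "S = pi3 (x,u,y)" by auto
      have e: "{x,u} \<in> snd G" "{u,y} \<in> snd G" "x < y" using t unfolding N3_def by auto
      have d: "distinct [x,u,y]" using e simple_edge[OF assms] by auto
      have "S \<in> subgraphs G" unfolding t pi3_def
        using e simple_edge[OF assms] by (auto intro!: subgraph_intro)
      then show "S \<in> {S \<in> subgraphs G. graph_iso S P3}" using iso3[OF d] t(2) unfolding pi3_def by simp
    qed
    show "{S \<in> subgraphs G. graph_iso S P3} \<subseteq> pi3 ` N3 G"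
    proof
      fix S assume S: "S \<in> {S \<in> subgraphs G. graph_iso S P3}"
      have S': "S \<in> subgraphs G" "graph_iso S P3" using S by simp_all
      obtain g where gc: "inj_on g (fst P3) \<and> fst S = g ` fst P3 \<and>
        snd S = (`) g ` snd P3 \<and> snd S \<subseteq> snd G"
        using copy_form[OF assms S'(1) S'(2) simple_P3] by (rule exE)
      have g: "inj_on g (fst P3)" "fst S = g ` fst P3"
        "snd S = (`) g ` snd P3" "snd S \<subseteq> snd G" by (insert gc, elim conjE, assumption)+
      have g3: "snd S = {{g 0, g 1},{g 1, g 2}}" using g(3) unfolding P3_def by simp
      have V: "fst S = {g 0, g 1, g 2}" using g(2) unfolding P3_def by simp
      have d: "g 0 \<noteq> g 2" using g(1) unfolding inj_on_def P3_def by auto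
      have S2: "S = ({g 0, g 1, g 2}, {{g 0, g 1},{g 1, g 2}})" using V g3 by (metis prod.collapse)
      have E: "{g 0, g 1} \<in> snd G" "{g 1, g 2} \<in> snd G" using g3 g(4) by auto
      show "S \<in> pi3 ` N3 G"
      proof (cases "g 0 < g 2")
        case True
        then have "(g 0, g 1, g 2) \<in> N3 G" using E unfolding N3_def by auto
        then show ?thesis using S2 unfolding pi3_def by force
      next
        case False
        then have "(g 2, g 1, g 0) \<in> N3 G" using E d unfolding N3_def by (auto simp: insert_commute)
        moreover have "S = pi3 (g 2, g 1, g 0)" using S2 unfolding pi3_def by (simp add: insert_commute)
        ultimately show ?thesis by blast
      qed
    qed
  qed
qed

lemma path_distinct: assumes "simple_graph G" "(x,u,v,y) \<in> Path G"
  shows "distinct [x,u,v,y]"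
  using assms(2) simple_edge[OF assms(1)] unfolding Path_def by auto

lemma p4_bij: assumes "simple_graph G"
  shows "bij_betw pi4 (P4N G) {S \<in> subgraphs G. graph_iso S P4}"
  unfolding bij_betw_def
proof
  show "inj_on pi4 (P4N G)"
  proof (rule inj_onI)
    fix a b assume ab: "a \<in> P4N G" "b \<in> P4N G" "pi4 a = pi4 b"
    obtain x u v y where a: "a = (x,u,v,y)" by (cases a)
    obtain x' u' v' y' where b: "b = (x',u',v',y')" by (cases b)
    have "distinct [x,u,v,y]" "x < y" "distinct [x',u',v',y']" "x' < y'"
      using ab a b path_distinct[OF assms] unfolding P4N_def by auto
    moreover have "{{x,u},{u,v},{v,y}} = {{x',u'},{u',v'},{v',y'}}" using ab(3) a b unfolding pi4_def by simp
    ultimately show "a = b" using inj4 a b by metis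
  qed
  show "pi4 ` P4N G = {S \<in> subgraphs G. graph_iso S P4}"
  proof
    show "pi4 ` P4N G \<subseteq> {S \<in> subgraphs G. graph_iso S P4}"
    proof
      fix S assume "S \<in> pi4 ` P4N G"
      then obtain x u v y where t: "(x,u,v,y) \<in> P4N G" "S = pi4 (x,u,v,y)" by auto
      have e: "{x,u} \<in> snd G" "{u,v} \<in> snd G" "{v,y} \<in> snd G" using t unfolding P4N_def Path_def by auto
      have d: "distinct [x,u,v,y]" using t path_distinct[OF assms] unfolding P4N_def by auto
      have "S \<in> subgraphs G" unfolding t pi4_def
        using e simple_edge[OF assms] by (auto intro!: subgraph_intro)
      then show "S \<in> {S \<in> subgraphs G. graph_iso S P4}" using iso4[OF d] t(2) unfolding pi4_def by simp
    qed
    show "{S \<in> subgraphs G. graph_iso S P4} \<subseteq> pi4 ` P4N G"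
    proof
      fix S assume S: "S \<in> {S \<in> subgraphs G. graph_iso S P4}"
      have S': "S \<in> subgraphs G" "graph_iso S P4" using S by simp_all
      obtain g where gc: "inj_on g (fst P4) \<and> fst S = g ` fst P4 \<and>
        snd S = (`) g ` snd P4 \<and> snd S \<subseteq> snd G"
        using copy_form[OF assms S'(1) S'(2) simple_P4] by (rule exE)
      have g: "inj_on g (fst P4)" "fst S = g ` fst P4"
        "snd S = (`) g ` snd P4" "snd S \<subseteq> snd G" by (insert gc, elim conjE, assumption)+
      have g3: "snd S = {{g 0, g 1},{g 1, g 2},{g 2, g 3}}" using g(3) unfolding P4_def by simp
      have V: "fst S = {g 0, g 1, g 2, g 3}" using g(2) unfolding P4_def by simp
      have d: "distinct [g 0, g 1, g 2, g 3]" using g(1) unfolding inj_on_def P4_def by auto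
      have S2: "S = ({g 0, g 1, g 2, g 3}, {{g 0, g 1},{g 1, g 2},{g 2, g 3}})" using V g3 by (metis prod.collapse)
      have E: "{g 0, g 1} \<in> snd G" "{g 1, g 2} \<in> snd G" "{g 2, g 3} \<in> snd G" using g3 g(4) by auto
      show "S \<in> pi4 ` P4N G"
      proof (cases "g 0 < g 3")
        case True
        then have "(g 0, g 1, g 2, g 3) \<in> P4N G" using E d unfolding P4N_def Path_def by auto
        then show ?thesis using S2 unfolding pi4_def by force
      next
        case False
        then have "(g 3, g 2, g 1, g 0) \<in> P4N G" using E d unfolding P4N_def Path_def by (auto simp: insert_commute)
        moreover have "S = pi4 (g 3, g 2, g 1, g 0)" using S2 unfolding pi4_def by (simp add: insert_commute)
        ultimately show ?thesis by blast
      qed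
    qed
  qed
qed

lemma cyc_distinct: assumes "simple_graph G" "(x,u,v,y) \<in> Cyc G"
  shows "distinct [x,u,v,y]"
  using assms(2) simple_edge[OF assms(1)] unfolding Cyc_def by auto

lemma sym_cyc: assumes "k < 8" "t \<in> Cyc G" shows "dsym k t \<in> Cyc G"
proof -
  obtain x u v y where t: "t = (x,u,v,y)" by (cases t)
  show ?thesis using lt8[OF assms(1)] assms(2) unfolding t
    by (elim disjE) (simp_all add: dsym_def Cyc_def insert_commute)
qed

lemma sym_pic: assumes "k < 8" shows "pic (dsym k t) = pic t"
proof -
  obtain x u v y where t: "t = (x,u,v,y)" by (cases t)
  show ?thesis using lt8[OF assms(1)] unfolding t
    by (elim disjE) (simp_all add: dsym_def pic_def insert_commute)
qed

lemma min4: fixes x u v y m :: nat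
  assumes "m = x \<or> m = u \<or> m = v \<or> m = y" "m \<le> x" "m \<le> u" "m \<le> v" "m \<le> y" "distinct [x,u,v,y]"
  shows "(x<u \<and> x<v \<and> x<y) \<or> (u<x \<and> u<v \<and> u<y) \<or> (v<x \<and> v<u \<and> v<y) \<or> (y<x \<and> y<u \<and> y<v)"
  using assms(1)
proof (elim disjE)
  assume "m = x" then show ?thesis using assms(2-6) by (intro disjI1) auto
next
  assume "m = u" then show ?thesis using assms(2-6) by (intro disjI2 disjI1) auto
next
  assume "m = v" then show ?thesis using assms(2-6) by (intro disjI2 disjI1) auto
next
  assume "m = y" then show ?thesis using assms(2-6) by (intro disjI2) auto
qed

lemma cyc_cover: assumes "simple_graph G" "t \<in> Cyc G"
  shows "\<exists>k<8. \<exists>t'\<in>NC G. t = dsym k t'"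
proof -
  obtain x u v y where t: "t = (x,u,v,y)" by (cases t)
  have d: "distinct [x,u,v,y]" using cyc_distinct[OF assms(1)] assms(2) t by simp
  have c: "(x,u,v,y) \<in> Cyc G" using assms(2) t by simp
  have cs: "dsym k (x,u,v,y) \<in> Cyc G" if "k < 8" for k using sym_cyc[OF that c] .
  have mi: "Min {x,u,v,y} \<in> {x,u,v,y}" by (rule Min_in) auto
  have ml: "Min {x,u,v,y} \<le> x" "Min {x,u,v,y} \<le> u" "Min {x,u,v,y} \<le> v" "Min {x,u,v,y} \<le> y"
    by simp_all
  from mi have "Min {x,u,v,y} = x \<or> Min {x,u,v,y} = u \<or> Min {x,u,v,y} = v \<or> Min {x,u,v,y} = y" by simp
  then have m: "(x<u \<and> x<v \<and> x<y) \<or> (u<x \<and> u<v \<and> u<y) \<or> (v<x \<and> v<u \<and> v<y) \<or> (y<x \<and> y<u \<and> y<v)"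
    using min4[OF _ ml d] by blast
  have key: "\<exists>k<8. \<exists>j<8. dsym k (x,u,v,y) \<in> NC G \<and> dsym j (dsym k (x,u,v,y)) = (x,u,v,y)"
  proof -
    have P: "\<And>k j. k < 8 \<Longrightarrow> j < 8 \<Longrightarrow> (case dsym k (x,u,v,y) of (a,b,c,e) \<Rightarrow> a < b \<and> a < c \<and> a < e \<and> b < e) \<Longrightarrow>
       dsym j (dsym k (x,u,v,y)) = (x,u,v,y) \<Longrightarrow> ?thesis"
    proof -
      fix k j assume kj: "k < (8::nat)" "j < (8::nat)"
        and o: "(case dsym k (x,u,v,y) of (a,b,c,e) \<Rightarrow> a < b \<and> a < c \<and> a < e \<and> b < e)"
        and eq: "dsym j (dsym k (x,u,v,y)) = (x,u,v,y)"
      obtain a b c e where se: "dsym k (x,u,v,y) = (a,b,c,e)" by (cases "dsym k (x,u,v,y)") auto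
      have "(a,b,c,e) \<in> Cyc G" using cs[OF kj(1)] se by simp
      moreover have "a < b \<and> a < c \<and> a < e \<and> b < e" using o se by simp
      ultimately have "dsym k (x,u,v,y) \<in> NC G" using se unfolding NC_def by simp
      then show "\<exists>k<8. \<exists>j<8. dsym k (x,u,v,y) \<in> NC G \<and> dsym j (dsym k (x,u,v,y)) = (x,u,v,y)"
        using kj eq by blast
    qed
    show ?thesis using m d
    proof (elim disjE)
      assume h: "x<u \<and> x<v \<and> x<y"
      show ?thesis
      proof (cases "u < y")
        case True then show ?thesis using h by (intro P[of 0 0]) (auto simp: dsym_def)
      next
        case False then show ?thesis using h d by (intro P[of 4 4]) (auto simp: dsym_def)
      qed
    next
      assume h: "u<x \<and> u<v \<and> u<y"
      show ?thesis
      proof (cases "v < x")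
        case True then show ?thesis using h by (intro P[of 1 3]) (auto simp: dsym_def)
      next
        case False then show ?thesis using h d by (intro P[of 5 5]) (auto simp: dsym_def)
      qed
    next
      assume h: "v<x \<and> v<u \<and> v<y"
      show ?thesis
      proof (cases "y < u")
        case True then show ?thesis using h by (intro P[of 2 2]) (auto simp: dsym_def)
      next
        case False then show ?thesis using h d by (intro P[of 6 6]) (auto simp: dsym_def)
      qed
    next
      assume h: "y<x \<and> y<u \<and> y<v"
      show ?thesis
      proof (cases "x < v")
        case True then show ?thesis using h by (intro P[of 3 1]) (auto simp: dsym_def)
      next
        case False then show ?thesis using h d by (intro P[of 7 7]) (auto simp: dsym_def)
      qed
    qed
  qed
  then show ?thesis unfolding t by metis
qed

lemma sym_inj: "inj_on (\<lambda>(t,k). dsym k t) (NC G \<times> {0..<8})"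
proof (rule inj_onI)
  fix a b assume ab: "a \<in> NC G \<times> {0..<8}" "b \<in> NC G \<times> {0..<8}"
    "(\<lambda>(t,k). dsym k t) a = (\<lambda>(t,k). dsym k t) b"
  obtain x u v y k where a: "a = ((x,u,v,y),k)" by (metis prod.collapse)
  obtain x' u' v' y' k' where b: "b = ((x',u',v',y'),k')" by (metis prod.collapse)
  have o: "x<u" "x<v" "x<y" "u<y" "x'<u'" "x'<v'" "x'<y'" "u'<y'" "k < 8" "k' < 8"
    using ab(1,2) a b unfolding NC_def by auto
  have e: "dsym k (x,u,v,y) = dsym k' (x',u',v',y')" using ab(3) a b by simp
  show "a = b" using lt8[OF o(9)] lt8[OF o(10)] e o unfolding a b
    by (elim disjE) (simp_all add: dsym_def)
qed

lemma card_Cyc: assumes "simple_graph G"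
  shows "card (Cyc G) = 8 * card (NC G)"
proof -
  have "Cyc G = (\<lambda>(t,k). dsym k t) ` (NC G \<times> {0..<8})"
  proof
    show "Cyc G \<subseteq> (\<lambda>(t,k). dsym k t) ` (NC G \<times> {0..<8})"
      using cyc_cover[OF assms] by fastforce
    show "(\<lambda>(t,k). dsym k t) ` (NC G \<times> {0..<8}) \<subseteq> Cyc G"
    proof
      fix z assume "z \<in> (\<lambda>(t,k). dsym k t) ` (NC G \<times> {0..<8})"
      then obtain t k where tk: "t \<in> NC G" "k < 8" "z = dsym k t" by auto
      have "t \<in> Cyc G" using tk(1) unfolding NC_def by auto
      then show "z \<in> Cyc G" using sym_cyc[OF tk(2)] tk(3) by simp
    qed
  qed
  then have "card (Cyc G) = card (NC G \<times> {0..<8::nat})" using sym_inj card_image by metis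
  then show ?thesis by (simp add: card_cartesian_product)
qed

lemma c4_bij: assumes "simple_graph G"
  shows "bij_betw pic (NC G) {S \<in> subgraphs G. graph_iso S C4}"
  unfolding bij_betw_def
proof
  show "inj_on pic (NC G)"
  proof (rule inj_onI)
    fix a b assume ab: "a \<in> NC G" "b \<in> NC G" "pic a = pic b"
    obtain x u v y where a: "a = (x,u,v,y)" by (cases a)
    obtain x' u' v' y' where b: "b = (x',u',v',y')" by (cases b)
    have "distinct [x,u,v,y]" "distinct [x',u',v',y']"
      using ab a b cyc_distinct[OF assms] unfolding NC_def by auto
    moreover have "x<u" "x<v" "x<y" "u<y" "x'<u'" "x'<v'" "x'<y'" "u'<y'"
      using ab a b unfolding NC_def by auto
    moreover have "{x,u,v,y} = {x',u',v',y'}" "{{x,u},{u,v},{v,y},{y,x}} = {{x',u'},{u',v'},{v',y'},{y',x'}}"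
      using ab(3) a b unfolding pic_def by simp_all
    ultimately show "a = b" using injc a b by metis
  qed
  show "pic ` NC G = {S \<in> subgraphs G. graph_iso S C4}"
  proof
    show "pic ` NC G \<subseteq> {S \<in> subgraphs G. graph_iso S C4}"
    proof
      fix S assume "S \<in> pic ` NC G"
      then obtain x u v y where t: "(x,u,v,y) \<in> NC G" "S = pic (x,u,v,y)" by auto
      have e: "{x,u} \<in> snd G" "{u,v} \<in> snd G" "{v,y} \<in> snd G" "{y,x} \<in> snd G"
        using t unfolding NC_def Cyc_def by auto
      have d: "distinct [x,u,v,y]" using t cyc_distinct[OF assms] unfolding NC_def by auto
      have "S \<in> subgraphs G" unfolding t pic_def
        using e simple_edge[OF assms] by (auto intro!: subgraph_intro)
      then show "S \<in> {S \<in> subgraphs G. graph_iso S C4}" using isoc[OF d] t(2) unfolding pic_def by simp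
    qed
    show "{S \<in> subgraphs G. graph_iso S C4} \<subseteq> pic ` NC G"
    proof
      fix S assume S: "S \<in> {S \<in> subgraphs G. graph_iso S C4}"
      have S': "S \<in> subgraphs G" "graph_iso S C4" using S by simp_all
      obtain g where gc: "inj_on g (fst C4) \<and> fst S = g ` fst C4 \<and>
        snd S = (`) g ` snd C4 \<and> snd S \<subseteq> snd G"
        using copy_form[OF assms S'(1) S'(2) simple_C4] by (rule exE)
      have g: "inj_on g (fst C4)" "fst S = g ` fst C4"
        "snd S = (`) g ` snd C4" "snd S \<subseteq> snd G" by (insert gc, elim conjE, assumption)+
      have g3: "snd S = {{g 0, g 1},{g 1, g 2},{g 2, g 3},{g 3, g 0}}" using g(3) unfolding C4_def by simp
      have V: "fst S = {g 0, g 1, g 2, g 3}" using g(2) unfolding C4_def by simp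
      have d: "distinct [g 0, g 1, g 2, g 3]" using g(1) unfolding inj_on_def C4_def by auto
      have S2: "S = pic (g 0, g 1, g 2, g 3)" using V g3 unfolding pic_def by (metis prod.collapse case_prod_conv)
      have "(g 0, g 1, g 2, g 3) \<in> Cyc G" using g3 g(4) d unfolding Cyc_def by auto
      then obtain k t' where "k < 8" "t' \<in> NC G" "(g 0, g 1, g 2, g 3) = dsym k t'"
        using cyc_cover[OF assms] by blast
      then show "S \<in> pic ` NC G" using S2 sym_pic by (metis image_eqI)
    qed
  qed
qed



definition Arcs :: "'a graph \<Rightarrow> ('a \<times> 'a) set" where
  "Arcs G = {(u,v). {u,v} \<in> snd G}"

definition deg :: "'a graph \<Rightarrow> 'a \<Rightarrow> nat" where
  "deg G u = card (nbr G u)"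

lemma nbr_sub: "nbr G u \<subseteq> fst G" unfolding nbr_def by auto

lemma finite_nbr: "simple_graph G \<Longrightarrow> finite (nbr G u)"
  using nbr_sub unfolding simple_graph_def by (metis finite_subset)

lemma arcs_sigma: "simple_graph G \<Longrightarrow> Arcs G = Sigma (fst G) (nbr G)"
  unfolding Arcs_def nbr_def using simple_edge by fastforce

lemma finite_arcs: "simple_graph G \<Longrightarrow> finite (Arcs G)"
  using arcs_sigma finite_nbr unfolding simple_graph_def by (metis finite_SigmaI)

lemma card_arcs: assumes "simple_graph G" shows "card (Arcs G) = (\<Sum>u\<in>fst G. deg G u)"
  unfolding arcs_sigma[OF assms] deg_def
  by (rule card_SigmaI) (use assms finite_nbr[OF assms] in \<open>auto simp: simple_graph_def\<close>)

lemma sum_arcs: assumes "simple_graph G"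
  shows "(\<Sum>p\<in>Arcs G. f (fst p)) = (\<Sum>u\<in>fst G. deg G u * f u)"
proof -
  have fin: "finite (fst G)" using assms unfolding simple_graph_def by simp
  have "(\<Sum>p\<in>Arcs G. f (fst p)) = (\<Sum>u\<in>fst G. \<Sum>v\<in>nbr G u. f u)"
    unfolding arcs_sigma[OF assms] using sum.Sigma[OF fin, of "nbr G" "\<lambda>u v. f u"] finite_nbr[OF assms]
    by (simp add: case_prod_beta)
  then show ?thesis unfolding deg_def by simp
qed

lemma sum_arcs_swap: assumes "simple_graph G"
  shows "(\<Sum>p\<in>Arcs G. f (snd p)) = (\<Sum>p\<in>Arcs G. f (fst p))"
proof -
  have s: "prod.swap ` Arcs G = Arcs G" unfolding Arcs_def by (auto simp: insert_commute image_iff)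
  have "(\<Sum>p\<in>Arcs G. f (fst p)) = (\<Sum>p\<in>prod.swap ` Arcs G. f (fst p))" using s by simp
  also have "\<dots> = (\<Sum>p\<in>Arcs G. f (snd p))" by (subst sum.reindex) (auto simp: inj_on_def)
  finally show ?thesis by simp
qed

lemma cs_int: fixes a :: "'a \<Rightarrow> int" assumes "finite A"
  shows "(\<Sum>x\<in>A. a x)^2 \<le> int (card A) * (\<Sum>x\<in>A. a x ^ 2)"
proof -
  define S where "S = (\<Sum>x\<in>A. a x)"
  define Q where "Q = (\<Sum>x\<in>A. a x ^ 2)"
  have inner: "(\<Sum>y\<in>A. (a x - a y)^2) = int (card A) * a x ^ 2 + Q - 2 * (a x * S)" for x
  proof -
    have "(\<Sum>y\<in>A. (a x - a y)^2) = (\<Sum>y\<in>A. a x ^ 2 + a y ^ 2 - 2 * (a x * a y))"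
      by (rule sum.cong) (auto simp: power2_eq_square algebra_simps)
    also have "\<dots> = (\<Sum>y\<in>A. a x ^ 2) + (\<Sum>y\<in>A. a y ^ 2) - (\<Sum>y\<in>A. 2 * (a x * a y))"
      by (simp add: sum_subtractf sum.distrib)
    also have "(\<Sum>y\<in>A. 2 * (a x * a y)) = 2 * (a x * S)"
      unfolding S_def by (simp add: sum_distrib_left)
    finally show ?thesis unfolding Q_def by simp
  qed
  have "0 \<le> (\<Sum>x\<in>A. \<Sum>y\<in>A. (a x - a y)^2)" by (simp add: sum_nonneg)
  also have "\<dots> = (\<Sum>x\<in>A. int (card A) * a x ^ 2 + Q - 2 * (a x * S))" using inner by simp
  also have "\<dots> = (\<Sum>x\<in>A. int (card A) * a x ^ 2) + (\<Sum>x\<in>A. Q) - (\<Sum>x\<in>A. 2 * (a x * S))"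
    by (simp add: sum_subtractf sum.distrib)
  also have "(\<Sum>x\<in>A. int (card A) * a x ^ 2) = int (card A) * Q" unfolding Q_def by (simp add: sum_distrib_left)
  also have "(\<Sum>x\<in>A. 2 * (a x * S)) = 2 * (S * S)" unfolding S_def by (simp add: sum_distrib_left sum_distrib_right mult.commute)
  finally have "0 \<le> int (card A) * Q + int (card A) * Q - 2 * (S * S)" by simp
  then have "S * S \<le> int (card A) * Q" by (simp add: algebra_simps)
  then show ?thesis unfolding S_def[symmetric] Q_def[symmetric] by (simp add: power2_eq_square)
qed

lemma cs_nat: fixes f :: "'a \<Rightarrow> nat" assumes "finite A"
  shows "(\<Sum>x\<in>A. f x)^2 \<le> card A * (\<Sum>x\<in>A. f x ^ 2)"
proof -
  have "(\<Sum>x\<in>A. int (f x))^2 \<le> int (card A) * (\<Sum>x\<in>A. int (f x) ^ 2)" by (rule cs_int[OF assms])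
  then have "int ((\<Sum>x\<in>A. f x)^2) \<le> int (card A * (\<Sum>x\<in>A. f x ^ 2))" by simp
  then show ?thesis by linarith
qed

lemma sub2: "A \<subseteq> {a,b} \<Longrightarrow> card A \<le> 2"
proof -
  assume "A \<subseteq> {a,b}"
  then have "card A \<le> card {a,b}" by (intro card_mono) auto
  also have "\<dots> \<le> 2" by (cases "a = b") auto
  finally show ?thesis .
qed

lemma tri_nbr:
  assumes G: "simple_graph G" "free T1 G" and e: "{u,v} \<in> snd G" "{u,w} \<in> snd G" "{v,w} \<in> snd G"
  shows "nbr G u \<subseteq> {v,w}"
proof
  fix z assume z: "z \<in> nbr G u"
  show "z \<in> {v,w}"
  proof (rule ccontr)
    assume nz: "z \<notin> {v,w}"
    have ez: "{u,z} \<in> snd G" using z unfolding nbr_def by auto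
    have d: "distinct [v,w,u,z]" using nz e ez simple_edge[OF G(1)] by auto
    have "({v,w,u,z}, {{v,w},{w,u},{v,u},{u,z}}) \<in> subgraphs G"
      unfolding subgraphs_def using e ez simple_edge[OF G(1)] by (auto simp: insert_commute)
    moreover have "graph_iso ({v,w,u,z}, {{v,w},{w,u},{v,u},{u,z}}) T1" using isoT1[OF d] .
    ultimately show False using G(2) unfolding free_def by blast
  qed
qed

lemma deg_sum_le:
  assumes G: "simple_graph G" "free T1 G" "4 \<le> card (fst G)" and e: "{u,v} \<in> snd G"
  shows "deg G u + deg G v \<le> card (fst G)"
proof (cases "nbr G u \<inter> nbr G v = {}")
  case True
  have fin: "finite (fst G)" using G unfolding simple_graph_def by simp
  have "deg G u + deg G v = card (nbr G u \<union> nbr G v)"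
    unfolding deg_def using True finite_nbr[OF G(1)] by (simp add: card_Un_disjoint)
  also have "\<dots> \<le> card (fst G)" using nbr_sub[of G u] nbr_sub[of G v] fin by (intro card_mono) auto
  finally show ?thesis .
next
  case False
  then obtain w where w: "{u,w} \<in> snd G" "{v,w} \<in> snd G" unfolding nbr_def by auto
  have ev: "{v,u} \<in> snd G" using e by (simp add: insert_commute)
  have "nbr G u \<subseteq> {v,w}" using tri_nbr[OF G(1,2) e w(1) w(2)] .
  then have "deg G u \<le> 2" unfolding deg_def by (rule sub2) 
  moreover have "nbr G v \<subseteq> {u,w}" using tri_nbr[OF G(1,2) ev w(2) w(1)] .
  then have "deg G v \<le> 2" unfolding deg_def by (rule sub2)
  ultimately show ?thesis using G(3) by linarith
qed



definition offd :: "'a set \<Rightarrow> ('a \<times> 'a) set" where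
  "offd A = {(x,y). x \<in> A \<and> y \<in> A \<and> x \<noteq> y}"

lemma card_offd: assumes "finite A" shows "card (offd A) = card A * (card A - 1)"
proof -
  have u: "A \<times> A = offd A \<union> (\<lambda>x. (x,x)) ` A" unfolding offd_def by auto
  have "card (A \<times> A) = card (offd A) + card ((\<lambda>x. (x,x)) ` A)"
    unfolding u by (rule card_Un_disjoint) (auto simp: offd_def assms intro: finite_subset[of _ "A \<times> A"])
  moreover have "card ((\<lambda>x. (x,x)) ` A) = card A" by (rule card_image) (auto simp: inj_on_def)
  ultimately have "card A * card A = card (offd A) + card A" by (simp add: card_cartesian_product)
  then show ?thesis by (simp add: algebra_simps diff_mult_distrib2)
qed

definition All3 :: "nat graph \<Rightarrow> (nat \<times> nat \<times> nat) set" where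
  "All3 G = {(x,u,y). {x,u} \<in> snd G \<and> {u,y} \<in> snd G \<and> x \<noteq> y}"

lemma finite_V: "simple_graph G \<Longrightarrow> finite (fst G)" unfolding simple_graph_def by simp

lemma card_All3_N3: assumes "simple_graph G" shows "card (All3 G) = 2 * card (N3 G)"
proof -
  have fin: "finite (All3 G)"
  proof (rule finite_subset)
    show "All3 G \<subseteq> fst G \<times> fst G \<times> fst G" unfolding All3_def using simple_edge[OF assms] by auto
  qed (use finite_V[OF assms] in auto)
  have u: "All3 G = N3 G \<union> (\<lambda>(x,u,y). (y,u,x)) ` N3 G"
    unfolding All3_def N3_def by (auto simp: insert_commute image_iff) 
  have "card (All3 G) = card (N3 G) + card ((\<lambda>(x,u,y). (y,u,x)) ` N3 G)"
    unfolding u by (rule card_Un_disjoint) (use fin u in \<open>auto simp: N3_def\<close>)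
  moreover have "card ((\<lambda>(x,u,y). (y,u,x)) ` N3 G) = card (N3 G)"
    by (rule card_image) (auto simp: inj_on_def)
  ultimately show ?thesis by simp
qed

lemma card_All3: assumes "simple_graph G" shows "card (All3 G) = (\<Sum>u\<in>fst G. deg G u * (deg G u - 1))"
proof -
  have u: "All3 G = (\<lambda>(u,(x,y)). (x,u,y)) ` (SIGMA u:fst G. offd (nbr G u))"
  proof (rule set_eqI)
    fix t :: "nat \<times> nat \<times> nat"
    obtain x u y where tt: "t = (x,u,y)" by (cases t)
    show "t \<in> All3 G \<longleftrightarrow> t \<in> (\<lambda>(u,(x,y)). (x,u,y)) ` (SIGMA u:fst G. offd (nbr G u))"
    proof
      assume "t \<in> All3 G"
      then have e: "{x,u} \<in> snd G" "{u,y} \<in> snd G" "x \<noteq> y" unfolding tt All3_def by auto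
      have e2: "{u,x} \<in> snd G" using e(1) by (simp add: insert_commute)
      have "(u,(x,y)) \<in> (SIGMA u:fst G. offd (nbr G u))"
        using e e2 simple_edge[OF assms e(1)] simple_edge[OF assms e(2)] unfolding offd_def nbr_def by simp
      moreover have "t = (\<lambda>(u,(x,y)). (x,u,y)) (u,(x,y))" unfolding tt by simp
      ultimately show "t \<in> (\<lambda>(u,(x,y)). (x,u,y)) ` (SIGMA u:fst G. offd (nbr G u))" by (rule rev_image_eqI)
    next
      assume "t \<in> (\<lambda>(u,(x,y)). (x,u,y)) ` (SIGMA u:fst G. offd (nbr G u))"
      then obtain u' x' y' where m: "(u',(x',y')) \<in> (SIGMA u:fst G. offd (nbr G u))" "t = (x',u',y')" by auto
      then have "{u',x'} \<in> snd G" "{u',y'} \<in> snd G" "x' \<noteq> y'" unfolding offd_def nbr_def by auto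
      then show "t \<in> All3 G" using m(2) unfolding All3_def by (simp add: insert_commute)
    qed
  qed
  have "card (All3 G) = card (SIGMA u:fst G. offd (nbr G u))"
    unfolding u by (rule card_image) (auto simp: inj_on_def)
  also have "\<dots> = (\<Sum>u\<in>fst G. card (offd (nbr G u)))"
    by (rule card_SigmaI) (use finite_V[OF assms] finite_nbr[OF assms] in \<open>auto simp: offd_def intro: finite_subset[of _ "nbr G _ \<times> nbr G _"]\<close>)
  also have "\<dots> = (\<Sum>u\<in>fst G. deg G u * (deg G u - 1))"
    by (rule sum.cong) (simp_all add: card_offd[OF finite_nbr[OF assms]] deg_def)
  finally show ?thesis .
qed

definition rev4 :: "nat \<times> nat \<times> nat \<times> nat \<Rightarrow> nat \<times> nat \<times> nat \<times> nat" where
  "rev4 = (\<lambda>(x,u,v,y). (y,v,u,x))"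

lemma finite_Path: assumes "simple_graph G" shows "finite (Path G)"
proof (rule finite_subset)
  show "Path G \<subseteq> fst G \<times> fst G \<times> fst G \<times> fst G" unfolding Path_def using simple_edge[OF assms] by auto
qed (use finite_V[OF assms] in auto)

lemma rev4_Path: assumes "t \<in> Path G" shows "rev4 t \<in> Path G"
proof -
  obtain x u v y where t: "t = (x,u,v,y)" by (cases t)
  show ?thesis using assms unfolding t Path_def rev4_def by (simp add: insert_commute)
qed

lemma rev4_rev4: "rev4 (rev4 t) = t"
  unfolding rev4_def by (cases t) simp

lemma card_Path_P4N: assumes "simple_graph G" shows "card (Path G) = 2 * card (P4N G)"
proof -
  have sub: "P4N G \<subseteq> Path G" unfolding P4N_def by auto
  have u: "Path G = P4N G \<union> rev4 ` P4N G"
  proof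
    show "Path G \<subseteq> P4N G \<union> rev4 ` P4N G"
    proof
      fix t assume t: "t \<in> Path G"
      obtain x u v y where tt: "t = (x,u,v,y)" by (cases t)
      have "x \<noteq> y" using t tt unfolding Path_def by simp
      then consider "x < y" | "y < x" by linarith
      then show "t \<in> P4N G \<union> rev4 ` P4N G"
      proof cases
        case 1 then show ?thesis using t tt unfolding P4N_def by simp
      next
        case 2
        have "rev4 t \<in> P4N G" using rev4_Path[OF t] 2 tt unfolding P4N_def rev4_def by simp
        then have "rev4 (rev4 t) \<in> rev4 ` P4N G" by (rule imageI)
        then show ?thesis unfolding rev4_rev4 by simp
      qed
    qed
    show "P4N G \<union> rev4 ` P4N G \<subseteq> Path G" using sub rev4_Path by blast
  qed
  have d: "P4N G \<inter> rev4 ` P4N G = {}" unfolding P4N_def rev4_def by auto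
  have "card (Path G) = card (P4N G) + card (rev4 ` P4N G)"
    unfolding u by (rule card_Un_disjoint) (use finite_Path[OF assms] u d in auto)
  moreover have "card (rev4 ` P4N G) = card (P4N G)"
    by (rule card_image) (metis inj_on_def rev4_rev4)
  ultimately show ?thesis by simp
qed

lemma card_Path_le: assumes "simple_graph G"
  shows "card (Path G) \<le> (\<Sum>p\<in>Arcs G. (deg G (fst p) - 1) * (deg G (snd p) - 1))"
proof -
  have sub: "Path G \<subseteq> (\<lambda>(p,(x,y)). (x, fst p, snd p, y)) `
      (SIGMA p:Arcs G. (nbr G (fst p) - {snd p}) \<times> (nbr G (snd p) - {fst p}))"
  proof
    fix t assume t: "t \<in> Path G"
    obtain x u v y where tt: "t = (x,u,v,y)" by (cases t)
    have e: "{x,u} \<in> snd G" "{u,v} \<in> snd G" "{v,y} \<in> snd G" "x \<noteq> v" "u \<noteq> y"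
      using t tt unfolding Path_def by auto
    have "((u,v),(x,y)) \<in> (SIGMA p:Arcs G. (nbr G (fst p) - {snd p}) \<times> (nbr G (snd p) - {fst p}))"
      using e simple_edge[OF assms] unfolding Arcs_def nbr_def by (auto simp: insert_commute)
    moreover have "t = (\<lambda>(p,(x,y)). (x, fst p, snd p, y)) ((u,v),(x,y))" unfolding tt by simp
    ultimately show "t \<in> (\<lambda>(p,(x,y)). (x, fst p, snd p, y)) `
      (SIGMA p:Arcs G. (nbr G (fst p) - {snd p}) \<times> (nbr G (snd p) - {fst p}))"
      by (rule rev_image_eqI)
  qed
  have fs: "finite (SIGMA p:Arcs G. (nbr G (fst p) - {snd p}) \<times> (nbr G (snd p) - {fst p}))"
    using finite_arcs[OF assms] finite_nbr[OF assms] by auto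
  have "card (Path G) \<le> card (SIGMA p:Arcs G. (nbr G (fst p) - {snd p}) \<times> (nbr G (snd p) - {fst p}))"
    using card_mono[OF finite_imageI[OF fs] sub] card_image_le[OF fs, of "\<lambda>(p,(x,y)). (x, fst p, snd p, y)"]
    by linarith
  also have "\<dots> = (\<Sum>p\<in>Arcs G. card ((nbr G (fst p) - {snd p}) \<times> (nbr G (snd p) - {fst p})))"
    by (rule card_SigmaI) (use finite_arcs[OF assms] finite_nbr[OF assms] in auto)
  also have "\<dots> = (\<Sum>p\<in>Arcs G. (deg G (fst p) - 1) * (deg G (snd p) - 1))"
  proof (rule sum.cong)
    fix p assume p: "p \<in> Arcs G"
    obtain a b where ab: "p = (a,b)" by (cases p)
    have e: "{a,b} \<in> snd G" using p ab unfolding Arcs_def by simp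
    have "b \<in> nbr G a" "a \<in> nbr G b" using e simple_edge[OF assms e] unfolding nbr_def
      by (simp_all add: insert_commute)
    then have "snd p \<in> nbr G (fst p)" "fst p \<in> nbr G (snd p)" using ab by simp_all
    then show "card ((nbr G (fst p) - {snd p}) \<times> (nbr G (snd p) - {fst p})) =
        (deg G (fst p) - 1) * (deg G (snd p) - 1)"
      unfolding deg_def using finite_nbr[OF assms] by (simp add: card_cartesian_product)
  qed simp
  finally show ?thesis .
qed

lemma Cyc_Path: assumes "simple_graph G" shows "Cyc G \<subseteq> Path G"
  unfolding Cyc_def Path_def using simple_edge[OF assms] by auto

lemma t2_edge: "{p,q} \<in> snd (T2 n) \<longleftrightarrow> (p < n div 2 \<and> n div 2 \<le> q \<and> q < n) \<or> (q < n div 2 \<and> n div 2 \<le> p \<and> p < n)"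
  unfolding T2_def by (auto simp: doubleton_eq_iff)

lemma t2_simple: "simple_graph (T2 n)"
  unfolding simple_graph_def T2_def
  apply auto
  subgoal for u v by (rule exI[of _ u], rule exI[of _ v]) auto
  done

lemma t2_free: "free T1 (T2 n)"
  unfolding free_def
proof (intro ballI notI)
  fix S assume S: "S \<in> subgraphs (T2 n)" "graph_iso S T1"
  obtain g where g: "\<forall>i\<in>fst T1. \<forall>j\<in>fst T1. {g i, g j} \<in> snd S \<longleftrightarrow> {i, j} \<in> snd T1"
    using iso_inv[OF S(2)] by blast
  have sub: "snd S \<subseteq> snd (T2 n)" using S(1) unfolding subgraphs_def by auto
  have "{g 0, g 1} \<in> snd S" "{g 1, g 2} \<in> snd S" "{g 0, g 2} \<in> snd S"
    using g unfolding T1_def by auto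
  then have "{g 0, g 1} \<in> snd (T2 n)" "{g 1, g 2} \<in> snd (T2 n)" "{g 0, g 2} \<in> snd (T2 n)"
    using sub by auto
  then show False unfolding t2_edge by linarith
qed

lemma nbr_aux: fixes h n u :: nat assumes "u < n" "h \<le> n"
  shows "{v \<in> {0..<n}. (u < h \<and> h \<le> v \<and> v < n) \<or> (v < h \<and> h \<le> u \<and> u < n)} =
    (if u < h then {h..<n} else {0..<h})"
  using assms by auto

lemma t2_nbr: assumes "u < n"
  shows "nbr (T2 n) u = (if u < n div 2 then {n div 2..<n} else {0..<n div 2})"
proof -
  have "nbr (T2 n) u = {v \<in> {0..<n}. (u < n div 2 \<and> n div 2 \<le> v \<and> v < n) \<or> (v < n div 2 \<and> n div 2 \<le> u \<and> u < n)}"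
    unfolding nbr_def t2_edge by (simp add: T2_def)
  also have "\<dots> = (if u < n div 2 then {n div 2..<n} else {0..<n div 2})"
    by (rule nbr_aux[OF assms]) simp
  finally show ?thesis .
qed

lemma t2_deg: assumes "u < n"
  shows "deg (T2 n) u = (if u < n div 2 then n - n div 2 else n div 2)"
  using t2_nbr[OF assms] unfolding deg_def by simp

lemma t2_cyc: "2 * ((n div 2) * (n div 2 - 1) * ((n - n div 2) * (n - n div 2 - 1))) \<le> card (Cyc (T2 n))"
proof -
  let ?h = "n div 2"
  let ?f = "\<lambda>((x,v),(u,y)). (x::nat,u::nat,v::nat,y::nat)"
  define X1 where "X1 = ?f ` (offd {0..<?h} \<times> offd {?h..<n})"
  define X2 where "X2 = ?f ` (offd {?h..<n} \<times> offd {0..<?h})"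
  have i: "inj_on ?f A" for A by (auto simp: inj_on_def)
  have c1: "card X1 = ?h * (?h - 1) * ((n - ?h) * (n - ?h - 1))"
    unfolding X1_def by (subst card_image[OF i]) (simp add: card_cartesian_product card_offd)
  have c2: "card X2 = ?h * (?h - 1) * ((n - ?h) * (n - ?h - 1))"
    unfolding X2_def by (subst card_image[OF i]) (simp add: card_cartesian_product card_offd)
  have s: "X1 \<union> X2 \<subseteq> Cyc (T2 n)"
    unfolding X1_def X2_def Cyc_def offd_def by (auto simp: t2_edge)
  have f: "finite (Cyc (T2 n))" using finite_Path[OF t2_simple] Cyc_Path[OF t2_simple] finite_subset by blast
  have d: "X1 \<inter> X2 = {}" unfolding X1_def X2_def offd_def by auto
  have "card (X1 \<union> X2) = card X1 + card X2"
    by (rule card_Un_disjoint) (use s f d finite_subset in auto)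
  then show ?thesis using card_mono[OF f s] c1 c2 by linarith
qed



lemma cnt3: assumes "simple_graph G" shows "count_copies P3 G = card (N3 G)"
  unfolding count_copies_def by (rule bij_betw_same_card[OF p3_bij[OF assms], symmetric])
lemma cnt4: assumes "simple_graph G" shows "count_copies P4 G = card (P4N G)"
  unfolding count_copies_def by (rule bij_betw_same_card[OF p4_bij[OF assms], symmetric])
lemma cntc: assumes "simple_graph G" shows "count_copies C4 G = card (NC G)"
  unfolding count_copies_def by (rule bij_betw_same_card[OF c4_bij[OF assms], symmetric])

lemma ar1: "2 * D \<le> 4 * (Y::nat) + 1 \<Longrightarrow> D \<le> 2 * Y" by presburger
lemma ar2: "4 * X \<le> 4 * (Y::nat) + 1 \<Longrightarrow> X \<le> Y" by presburger

lemma ar3: "2 \<le> h \<Longrightarrow> 2 \<le> b \<Longrightarrow> n = h + b \<Longrightarrow> (b - 1) + (h - 1) = n - (2::nat)" by linarith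

lemma mantel_arith: fixes D n :: nat assumes "2 * D \<le> n * n"
  shows "D \<le> 2 * (n div 2) * (n - n div 2)"
proof -
  obtain k where "n = 2 * k \<or> n = 2 * k + 1" by (metis dvd_mult_div_cancel odd_two_times_div_two_succ even_iff_mod_2_eq_zero)
  then show ?thesis
  proof
    assume n: "n = 2 * k"
    then have "2 * D \<le> 4 * (k * k)" using assms by (simp add: algebra_simps)
    then show ?thesis using n by simp
  next
    assume n: "n = 2 * k + 1"
    then have "2 * D \<le> 4 * (k * k + k) + 1" using assms by (simp add: algebra_simps)
    then have "D \<le> 2 * (k * k + k)" by (rule ar1)
    then show ?thesis using n by (simp add: algebra_simps)
  qed
qed

lemma prod_arith: fixes p q m :: nat assumes "p + q \<le> m"
  shows "p * q \<le> (m div 2) * (m - m div 2)"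
proof -
  have "0 \<le> (int p - int q)^2" by simp
  then have "4 * int (p * q) \<le> int ((p + q) * (p + q))" by (simp add: power2_eq_square algebra_simps)
  then have a: "4 * (p * q) \<le> (p + q) * (p + q)" by linarith
  have "(p + q) * (p + q) \<le> m * m" using assms by (simp add: mult_le_mono)
  then have b: "4 * (p * q) \<le> m * m" using a by linarith
  obtain k where "m = 2 * k \<or> m = 2 * k + 1" by (metis dvd_mult_div_cancel odd_two_times_div_two_succ even_iff_mod_2_eq_zero)
  then show ?thesis
  proof
    assume n: "m = 2 * k"
    then have "4 * (p * q) \<le> 4 * (k * k)" using b by (simp add: algebra_simps)
    then show ?thesis using n by simp
  next
    assume n: "m = 2 * k + 1"
    then have "4 * (p * q) \<le> 4 * (k * k + k) + 1" using b by (simp add: algebra_simps)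
    then have "p * q \<le> k * k + k" by (rule ar2)
    then show ?thesis using n by (simp add: algebra_simps)
  qed
qed

locale pawfree =
  fixes G :: "nat graph" and n :: nat
  assumes simple: "simple_graph G" and free: "free T1 G" and V: "fst G = {0..<n}" and n4: "4 \<le> n"
begin

lemma arc_bound: "p \<in> Arcs G \<Longrightarrow> deg G (fst p) + deg G (snd p) \<le> n"
  using deg_sum_le[OF simple free, of "fst p" "snd p"] V n4 unfolding Arcs_def by auto

lemma arc_deg_pos: assumes p: "p \<in> Arcs G" shows "1 \<le> deg G (fst p)" "1 \<le> deg G (snd p)"
proof -
  obtain a b where ab: "p = (a,b)" by (cases p)
  have e: "{a,b} \<in> snd G" using p ab unfolding Arcs_def by simp
  have "b \<in> nbr G a" "a \<in> nbr G b" using e simple_edge[OF simple e] unfolding nbr_def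
    by (simp_all add: insert_commute)
  then have "nbr G a \<noteq> {}" "nbr G b \<noteq> {}" by auto
  then have "1 \<le> deg G a" "1 \<le> deg G b" unfolding deg_def using finite_nbr[OF simple]
    by (simp_all add: Suc_le_eq card_gt_0_iff)
  then show "1 \<le> deg G (fst p)" "1 \<le> deg G (snd p)" using ab by simp_all
qed

lemma Q_bound: "2 * (\<Sum>u\<in>fst G. deg G u * deg G u) \<le> n * card (Arcs G)"
proof -
  have "2 * (\<Sum>u\<in>fst G. deg G u * deg G u) = (\<Sum>p\<in>Arcs G. deg G (fst p)) + (\<Sum>p\<in>Arcs G. deg G (snd p))"
    using sum_arcs[OF simple, of "deg G"] sum_arcs_swap[OF simple, of "deg G"] by simp
  also have "\<dots> = (\<Sum>p\<in>Arcs G. deg G (fst p) + deg G (snd p))" by (simp add: sum.distrib)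
  also have "\<dots> \<le> card (Arcs G) * n"
    using sum_bounded_above[of "Arcs G" "\<lambda>p. deg G (fst p) + deg G (snd p)" n] arc_bound by simp
  finally show ?thesis by (simp add: mult.commute)
qed

lemma D_bound: "card (Arcs G) \<le> 2 * (n div 2) * (n - n div 2)"
proof -
  let ?D = "card (Arcs G)" and ?Q = "\<Sum>u\<in>fst G. deg G u * deg G u"
  have cs: "?D * ?D \<le> n * ?Q"
    using cs_nat[OF finite_V[OF simple], of "deg G"] card_arcs[OF simple] V
    by (simp add: power2_eq_square)
  have "2 * ?D \<le> n * n"
  proof (cases "?D = 0")
    case False
    have "(2 * ?D) * ?D \<le> 2 * (n * ?Q)" using cs by simp
    also have "\<dots> = n * (2 * ?Q)" by simp
    also have "\<dots> \<le> n * (n * ?D)" using Q_bound by simp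
    finally have "(2 * ?D) * ?D \<le> (n * n) * ?D" by (simp add: algebra_simps)
    then show ?thesis using False by simp
  qed simp
  then show ?thesis by (rule mantel_arith)
qed

lemma path_bound: "card (Path G) \<le> 2 * ((n div 2) * (n div 2 - 1) * ((n - n div 2) * (n - n div 2 - 1)))"
proof -
  let ?h = "n div 2" let ?b = "n - n div 2"
  have "card (Path G) \<le> (\<Sum>p\<in>Arcs G. (deg G (fst p) - 1) * (deg G (snd p) - 1))"
    by (rule card_Path_le[OF simple])
  also have "\<dots> \<le> (\<Sum>p\<in>Arcs G. (?h - 1) * (?b - 1))"
  proof (rule sum_mono)
    fix p assume p: "p \<in> Arcs G"
    have "(deg G (fst p) - 1) + (deg G (snd p) - 1) \<le> n - 2" using arc_bound[OF p] arc_deg_pos[OF p] by linarith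
    then have "(deg G (fst p) - 1) * (deg G (snd p) - 1) \<le> ((n - 2) div 2) * ((n - 2) - (n - 2) div 2)"
      by (rule prod_arith)
    moreover have "(n - 2) div 2 = ?h - 1" "(n - 2) - (n - 2) div 2 = ?b - 1" using n4 by auto
    ultimately show "(deg G (fst p) - 1) * (deg G (snd p) - 1) \<le> (?h - 1) * (?b - 1)" by simp
  qed
  also have "\<dots> = card (Arcs G) * ((?h - 1) * (?b - 1))" by simp
  also have "\<dots> \<le> (2 * ?h * ?b) * ((?h - 1) * (?b - 1))" using D_bound by (rule mult_le_mono1)
  also have "\<dots> = 2 * (?h * (?h - 1) * (?b * (?b - 1)))" by (simp add: ac_simps)
  finally show ?thesis .
qed

lemma bound3: "count_copies P3 G \<le> count_copies P3 (T2 n)"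
proof -
  let ?h = "n div 2" let ?b = "n - n div 2"
  let ?D = "card (Arcs G)" and ?S = "\<Sum>u\<in>fst G. deg G u * (deg G u - 1)"
  have "?S + ?D = (\<Sum>u\<in>fst G. deg G u * deg G u)"
    unfolding card_arcs[OF simple] sum.distrib[symmetric]
    by (rule sum.cong) (auto simp: algebra_simps diff_mult_distrib2)
  then have "2 * ?S + 2 * ?D \<le> n * ?D" using Q_bound by linarith
  then have "2 * ?S \<le> (n - 2) * ?D" by (simp add: diff_mult_distrib)
  also have "\<dots> \<le> (n - 2) * (2 * ?h * ?b)" using D_bound by (rule mult_le_mono2)
  finally have S: "?S \<le> ?h * ?b * (n - 2)" by (simp add: ac_simps)
  have T: "(\<Sum>u\<in>{0..<n}. deg (T2 n) u * (deg (T2 n) u - 1)) = ?h * (?b * (?b - 1)) + ?b * (?h * (?h - 1))"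
  proof -
    have "(\<Sum>u\<in>{0..<n}. deg (T2 n) u * (deg (T2 n) u - 1)) =
        (\<Sum>u\<in>{0..<?h}. deg (T2 n) u * (deg (T2 n) u - 1)) + (\<Sum>u\<in>{?h..<n}. deg (T2 n) u * (deg (T2 n) u - 1))"
      by (rule sum.atLeastLessThan_concat[symmetric]) auto
    also have "(\<Sum>u\<in>{0..<?h}. deg (T2 n) u * (deg (T2 n) u - 1)) = (\<Sum>u\<in>{0..<?h}. ?b * (?b - 1))"
      by (rule sum.cong) (auto simp: t2_deg)
    also have "(\<Sum>u\<in>{?h..<n}. deg (T2 n) u * (deg (T2 n) u - 1)) = (\<Sum>u\<in>{?h..<n}. ?h * (?h - 1))"
      by (rule sum.cong) (auto simp: t2_deg)
    finally show ?thesis by simp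
  qed
  have hb: "?h * (?b * (?b - 1)) + ?b * (?h * (?h - 1)) = ?h * ?b * (n - 2)"
  proof -
    have h2: "2 \<le> ?h" "2 \<le> ?b" "?h \<le> n" using n4 by presburger+
    have e1: "?h * (?b * (?b - 1)) + ?b * (?h * (?h - 1)) = ?h * ?b * ((?b - 1) + (?h - 1))"
      by (simp add: add_mult_distrib2 mult.assoc mult.left_commute)
    have e2: "(?b - 1) + (?h - 1) = n - 2" using ar3[OF h2(1) h2(2), of n] by simp
    show ?thesis using e1 e2 by simp
  qed
  have "2 * count_copies P3 G = ?S"
    using cnt3[OF simple] card_All3_N3[OF simple] card_All3[OF simple] by simp
  moreover have "2 * count_copies P3 (T2 n) = ?h * (?b * (?b - 1)) + ?b * (?h * (?h - 1))"
    using cnt3[OF t2_simple] card_All3_N3[OF t2_simple] card_All3[OF t2_simple] T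
    by (simp add: T2_def)
  ultimately show ?thesis using S hb by linarith
qed

lemma bound4: "count_copies P4 G \<le> count_copies P4 (T2 n)"
proof -
  have "2 * count_copies P4 G = card (Path G)" using cnt4[OF simple] card_Path_P4N[OF simple] by simp
  moreover have "2 * count_copies P4 (T2 n) = card (Path (T2 n))" using cnt4[OF t2_simple] card_Path_P4N[OF t2_simple] by simp
  moreover have "card (Cyc (T2 n)) \<le> card (Path (T2 n))"
    using card_mono[OF finite_Path[OF t2_simple] Cyc_Path[OF t2_simple]] .
  ultimately show ?thesis using path_bound t2_cyc[of n] by linarith
qed

lemma boundc: "count_copies C4 G \<le> count_copies C4 (T2 n)"
proof -
  have "8 * count_copies C4 G = card (Cyc G)" using cntc[OF simple] card_Cyc[OF simple] by simp
  moreover have "8 * count_copies C4 (T2 n) = card (Cyc (T2 n))" using cntc[OF t2_simple] card_Cyc[OF t2_simple] by simp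
  moreover have "card (Cyc G) \<le> card (Path G)"
    using card_mono[OF finite_Path[OF simple] Cyc_Path[OF simple]] .
  ultimately show ?thesis using path_bound t2_cyc[of n] by linarith
qed

end

lemma ex_eq:
  assumes "\<And>G. simple_graph G \<Longrightarrow> fst G = {0..<n} \<Longrightarrow> free T1 G \<Longrightarrow> count_copies H G \<le> count_copies H (T2 n)"
  shows "ex n H T1 = count_copies H (T2 n)"
  unfolding ex_def
proof (rule Max_eqI)
  have "{G :: nat graph. simple_graph G \<and> fst G = {0..<n} \<and> free T1 G} \<subseteq> {{0..<n}} \<times> Pow (Pow {0..<n})"
    unfolding simple_graph_def by auto
  then have "finite {G :: nat graph. simple_graph G \<and> fst G = {0..<n} \<and> free T1 G}"
    by (rule finite_subset) auto
  then have "finite ((count_copies H) ` {G :: nat graph. simple_graph G \<and> fst G = {0..<n} \<and> free T1 G})"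
    by simp
  moreover have "{count_copies H G |G :: nat graph. simple_graph G \<and> fst G = {0..<n} \<and> free T1 G} =
     (count_copies H) ` {G :: nat graph. simple_graph G \<and> fst G = {0..<n} \<and> free T1 G}" by auto
  ultimately show "finite {count_copies H G |G :: nat graph. simple_graph G \<and> fst G = {0..<n} \<and> free T1 G}"
    by simp
  show "\<And>y. y \<in> {count_copies H G |G :: nat graph. simple_graph G \<and> fst G = {0..<n} \<and> free T1 G} \<Longrightarrow>
    y \<le> count_copies H (T2 n)" using assms by auto
  show "count_copies H (T2 n) \<in> {count_copies H G |G :: nat graph. simple_graph G \<and> fst G = {0..<n} \<and> free T1 G}"
    using t2_simple t2_free by (auto simp: T2_def)
qed

theorem corollary3p15:
  shows "\<forall>H \<in> {P3, P4, C4}. \<exists>n0. \<forall>n \<ge> n0. ex n H T1 = count_copies H (T2 n)"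
proof -
  have "\<exists>n0. \<forall>n \<ge> n0. ex n H T1 = count_copies H (T2 n)" if H: "H \<in> {P3, P4, C4}" for H
  proof (intro exI allI impI)
    fix n :: nat assume n: "4 \<le> n"
    show "ex n H T1 = count_copies H (T2 n)"
    proof (rule ex_eq)
      fix G :: "nat graph" assume G: "simple_graph G" "fst G = {0..<n}" "free T1 G"
      interpret pawfree G n using G n by (simp add: pawfree_def)
      show "count_copies H G \<le> count_copies H (T2 n)" using H bound3 bound4 boundc by auto
    qed
  qed
  then show ?thesis by blast
qed


end
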